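(* Let $r, J, L \ge 1$ be integers. Let $\mathbf{H}(X) = [h_{j,l}(X)]_{j \in [J], l \in [L]}$ be a $J \times L$ matrix whose entries are elements of $\mathbb{F}_2[X]/\langle X^r - 1\rangle$, each of which is either $0$, a monomial $X^{a}$, or a binomial $X^{a} + X^{b}$ with $a \not\equiv b \pmod r$. Let $H$ be the associated $Jr \times Lr$ binary parity-check matrix, and assume that $H$ has constant column weight and constant row weight. For each $j,l$ let $E_{j,l} \subseteq \mathbb{Z}_r$ be the set of exponents occurring in $h_{j,l}(X)$ (empty, one element, or two elements respectively). For $i, j \in [J]$ let $\mathbf{d}_{ij}$ be the multiset $\{(e - e') \bmod r : l \in [L],\ e \in E_{i,l},\ e' \in E_{j,l}\}$ (pairs with $e=e'$ when $i=j$ included). Then the code $C(H)$ is dual-containing if and only if $\mathbf{d}_{ij}$ is multiplicity even for all $i, j \in [J]$.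
   Context: The binary matrix $H$ associated with $\mathbf{H}(X)$ is obtained by replacing each entry $h_{j,l}(X) = \sum_{s=0}^{r-1} c_s X^s$ by the $r \times r$ binary circulant matrix whose first row is $(c_0, \ldots, c_{r-1})$ (each subsequent row being the cyclic right shift by one of the previous row). $C(H)$ denotes the binary linear code that is the null space of $H$. The code $C(H)$ is called dual-containing if $C(H)^\perp \subseteq C(H)$, equivalently $H H^T = 0$ over $\mathbb{F}_2$. A multiset is multiplicity even if every element occurs an even number of times (the empty multiset is multiplicity even). $[J] = \{1, \ldots, J\}$. *)

theory Defs
  imports Main "HOL-Library.Multiset"
begin

text \<open>Binary vectors of length n are functions nat => bool vanishing outside {0..<n};
  True represents 1 in F_2. Indices are 0-based: [J] is rendered as {0..<J}.\<close>

definition bvecs :: "nat \<Rightarrow> (nat \<Rightarrow> bool) set" where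
  "bvecs n = {x. \<forall>i. n \<le> i \<longrightarrow> \<not> x i}"

definition binner_zero :: "nat \<Rightarrow> (nat \<Rightarrow> bool) \<Rightarrow> (nat \<Rightarrow> bool) \<Rightarrow> bool" where
  "binner_zero n x y \<longleftrightarrow> even (card {i. i < n \<and> x i \<and> y i})"

text \<open>Null space C(H) of an m x n binary matrix H (H p k for row p, column k).\<close>
definition null_code :: "nat \<Rightarrow> nat \<Rightarrow> (nat \<Rightarrow> nat \<Rightarrow> bool) \<Rightarrow> (nat \<Rightarrow> bool) set" where
  "null_code m n H = {x \<in> bvecs n. \<forall>p<m. binner_zero n (H p) x}"

definition dual_code :: "nat \<Rightarrow> (nat \<Rightarrow> bool) set \<Rightarrow> (nat \<Rightarrow> bool) set" where
  "dual_code n C = {y \<in> bvecs n. \<forall>x\<in>C. binner_zero n x y}"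

definition dual_containing :: "nat \<Rightarrow> nat \<Rightarrow> (nat \<Rightarrow> nat \<Rightarrow> bool) \<Rightarrow> bool" where
  "dual_containing m n H \<longleftrightarrow> dual_code n (null_code m n H) \<subseteq> null_code m n H"

text \<open>Entries h j l of the polynomial matrix are given by coefficient functions:
  h j l s is the coefficient of X^s (s < r). The associated binary matrix replaces
  each entry by the r x r circulant whose row a, column b entry is c_((b - a) mod r).\<close>
definition assoc_matrix :: "nat \<Rightarrow> (nat \<Rightarrow> nat \<Rightarrow> nat \<Rightarrow> bool) \<Rightarrow> nat \<Rightarrow> nat \<Rightarrow> bool" where
  "assoc_matrix r h p k = h (p div r) (k div r) ((k mod r + r - p mod r) mod r)"

definition exps :: "nat \<Rightarrow> (nat \<Rightarrow> nat \<Rightarrow> nat \<Rightarrow> bool) \<Rightarrow> nat \<Rightarrow> nat \<Rightarrow> nat set" where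
  "exps r h j l = {s. s < r \<and> h j l s}"

definition dmset :: "nat \<Rightarrow> nat \<Rightarrow> (nat \<Rightarrow> nat \<Rightarrow> nat \<Rightarrow> bool) \<Rightarrow> nat \<Rightarrow> nat \<Rightarrow> nat multiset" where
  "dmset r L h i j = image_mset (\<lambda>(l, e, e'). (e + r - e') mod r)
     (mset_set {(l, e, e'). l < L \<and> e \<in> exps r h i l \<and> e' \<in> exps r h j l})"

definition multiplicity_even :: "'a multiset \<Rightarrow> bool" where
  "multiplicity_even M \<longleftrightarrow> (\<forall>x. even (count M x))"

end

theory Submission
  imports Defs
begin

lemma count_img_mset_set:
  "finite S \<Longrightarrow> count (image_mset f (mset_set S)) x = card {s\<in>S. f s = x}"
  by (smt (verit, del_insts) Collect_cong count_conv_size_mset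
    filter_mset_image_mset filter_mset_mset_set size_image_mset size_mset_set)

definition tr :: "nat \<Rightarrow> (nat \<Rightarrow> bool) \<Rightarrow> nat \<Rightarrow> bool" where
  "tr n x = (\<lambda>k. k < n \<and> x k)"

lemma bz_sym: "binner_zero n x y = binner_zero n y x"
  unfolding binner_zero_def by (simp add: conj_commute conj_left_commute)

lemma bz_tr: "binner_zero n (tr n x) y = binner_zero n x y"
proof -
  have "{i. i < n \<and> tr n x i \<and> y i} = {i. i < n \<and> x i \<and> y i}" unfolding tr_def by blast
  then show ?thesis unfolding binner_zero_def by simp
qed

lemma tr_bvecs: "tr n x \<in> bvecs n"
  unfolding tr_def bvecs_def by auto

lemma dc_iff:
  "dual_containing m n H \<longleftrightarrow> (\<forall>p<m. \<forall>q<m. binner_zero n (H p) (H q))"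
proof
  assume dc: "dual_containing m n H"
  show "\<forall>p<m. \<forall>q<m. binner_zero n (H p) (H q)"
  proof (intro allI impI)
    fix p q assume p: "p < m" and q: "q < m"
    have "\<forall>x\<in>null_code m n H. binner_zero n x (tr n (H p))"
    proof
      fix x assume "x \<in> null_code m n H"
      then have "binner_zero n (H p) x" using p unfolding null_code_def by blast
      then have "binner_zero n (tr n (H p)) x" by (simp only: bz_tr)
      then show "binner_zero n x (tr n (H p))" using bz_sym by blast
    qed
    then have "tr n (H p) \<in> dual_code n (null_code m n H)"
      unfolding dual_code_def using tr_bvecs by blast
    then have "tr n (H p) \<in> null_code m n H" using dc unfolding dual_containing_def by blast
    then have "binner_zero n (H q) (tr n (H p))" using q unfolding null_code_def by blast
    then have "binner_zero n (tr n (H p)) (H q)" using bz_sym by blast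
    then show "binner_zero n (H p) (H q)" by (simp only: bz_tr)
  qed
next
  assume o: "\<forall>p<m. \<forall>q<m. binner_zero n (H p) (H q)"
  have trn: "tr n (H p) \<in> null_code m n H" if "p < m" for p
  proof -
    have "binner_zero n (H q) (tr n (H p))" if "q < m" for q
    proof -
      have "binner_zero n (H p) (H q)" using o \<open>p < m\<close> that by blast
      then have "binner_zero n (tr n (H p)) (H q)" by (simp only: bz_tr)
      then show ?thesis using bz_sym by blast
    qed
    then show ?thesis unfolding null_code_def using tr_bvecs by blast
  qed
  show "dual_containing m n H"
    unfolding dual_containing_def
  proof
    fix y assume y: "y \<in> dual_code n (null_code m n H)"
    have "binner_zero n (H p) y" if "p < m" for p
    proof -
      have "binner_zero n (tr n (H p)) y" using y trn[OF that] unfolding dual_code_def by blast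
      then show ?thesis by (simp only: bz_tr)
    qed
    then show "y \<in> null_code m n H" using y unfolding dual_code_def null_code_def by blast
  qed
qed

lemma sub_mod: "a < r \<Longrightarrow> b < r \<Longrightarrow> int ((a + r - b) mod r) = (int a - int b) mod int r"
proof -
  assume "a < r" "b < r"
  then have "int (a + r - b) = int a - int b + int r" by simp
  then show ?thesis by (simp add: zmod_int)
qed

lemma overlap:
  assumes r: "r \<ge> 1" and i: "i < J" and j: "j < J" and a: "a < r" and c: "c < r"
  shows "card {k. k < L * r \<and> assoc_matrix r h (i*r+a) k \<and> assoc_matrix r h (j*r+c) k}
     = count (dmset r L h i j) ((c + r - a) mod r)"
proof -
  define S where "S = {(l, e, e'). l < L \<and> e \<in> exps r h i l \<and> e' \<in> exps r h j l}"
  define f where "f = (\<lambda>(l::nat, e::nat, e'::nat). (e + r - e') mod r)"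
  define d where "d = (c + r - a) mod r"
  define K where "K = {k. k < L * r \<and> assoc_matrix r h (i*r+a) k \<and> assoc_matrix r h (j*r+c) k}"
  define g where "g = (\<lambda>k. (k div r, (k mod r + r - a) mod r, (k mod r + r - c) mod r))"
  have fin: "finite S"
    by (rule finite_subset[of _ "{..<L} \<times> {..<r} \<times> {..<r}"]) (auto simp: S_def exps_def)
  have divi: "(i*r+a) div r = i" "(i*r+a) mod r = a" "(j*r+c) div r = j" "(j*r+c) mod r = c"
    using a c by auto
  have inj: "inj_on g K"
  proof
    fix k1 k2 assume "k1 \<in> K" "k2 \<in> K" "g k1 = g k2"
    then have d1: "k1 div r = k2 div r" and m: "(k1 mod r + r - a) mod r = (k2 mod r + r - a) mod r"
      by (auto simp: g_def)
    have "int ((k1 mod r + r - a) mod r) = int ((k2 mod r + r - a) mod r)" using m by simp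
    then have "(int (k1 mod r) - int a) mod int r = (int (k2 mod r) - int a) mod int r"
      using a r by (simp add: sub_mod)
    then have "int (k1 mod r) mod int r = int (k2 mod r) mod int r"
      by (metis add.commute diff_add_cancel mod_add_left_eq)
    then have "k1 mod r = k2 mod r" using r
      by (metis mod_mod_trivial nat_int zmod_int)
    then show "k1 = k2" using d1 by (metis div_mult_mod_eq)
  qed
  have img: "g ` K = {s\<in>S. f s = d}"
  proof
    show "g ` K \<subseteq> {s\<in>S. f s = d}"
    proof
      fix s assume "s \<in> g ` K"
      then obtain k where k: "k \<in> K" and s: "s = g k" by blast
      define b where "b = k mod r"
      have b: "b < r" using r by (simp add: b_def)
      have kl: "k div r < L" using k r unfolding K_def
        by (simp add: less_mult_imp_div_less)
      have e1: "h i (k div r) ((b + r - a) mod r)" "h j (k div r) ((b + r - c) mod r)"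
        using k divi unfolding K_def assoc_matrix_def b_def by auto
      have "int (((b + r - a) mod r + r - (b + r - c) mod r) mod r)
            = ((int b - int a) mod int r - (int b - int c) mod int r) mod int r"
        using b a c r by (simp add: sub_mod)
      also have "\<dots> = (int c - int a) mod int r" by (simp add: mod_diff_eq)
      also have "\<dots> = int d" using a c unfolding d_def by (simp add: sub_mod)
      finally have "((b + r - a) mod r + r - (b + r - c) mod r) mod r = d" by simp
      then show "s \<in> {s\<in>S. f s = d}"
        using s e1 kl r unfolding g_def S_def f_def exps_def b_def by auto
    qed
  next
    show "{s\<in>S. f s = d} \<subseteq> g ` K"
    proof
      fix s assume "s \<in> {s\<in>S. f s = d}"
      then obtain l e e' where s: "s = (l, e, e')" and l: "l < L" and e: "e < r" "h i l e"
        and e': "e' < r" "h j l e'" and fd: "(e + r - e') mod r = d"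
        unfolding S_def f_def exps_def by auto
      define b where "b = (e + a) mod r"
      define k where "k = l * r + b"
      have b: "b < r" using r by (simp add: b_def)
      have kd: "k div r = l" "k mod r = b" using b by (auto simp: k_def)
      have kL: "k < L * r"
      proof -
        have "k < l * r + r" using b by (simp add: k_def)
        also have "\<dots> \<le> L * r" using l by (metis Suc_leI mult_Suc mult_le_mono1 add.commute)
        finally show ?thesis .
      qed
      have "int ((b + r - a) mod r) = (int ((e + a) mod r) - int a) mod int r"
        using b a by (simp add: sub_mod b_def)
      also have "\<dots> = (int e) mod int r" by (simp add: zmod_int mod_diff_left_eq)
      also have "\<dots> = int e" using e by simp
      finally have ea: "(b + r - a) mod r = e" by simp
      have de: "(int e - int e') mod int r = (int c - int a) mod int r"
        using fd e e' a c unfolding d_def by (metis sub_mod)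
      have "int ((b + r - c) mod r) = (int ((e + a) mod r) - int c) mod int r"
        using b c by (simp add: sub_mod b_def)
      also have "\<dots> = (int e + int a - int c) mod int r" by (simp add: zmod_int mod_diff_left_eq)
      also have "\<dots> = (int e - (int e - int e')) mod int r"
      proof -
        have "(int e + int a - int c) mod int r = (int e - (int c - int a)) mod int r"
          by (simp add: algebra_simps)
        also have "\<dots> = (int e - (int c - int a) mod int r) mod int r" by (simp add: mod_diff_right_eq)
        also have "\<dots> = (int e - (int e - int e') mod int r) mod int r" using de by simp
        also have "\<dots> = (int e - (int e - int e')) mod int r" by (simp add: mod_diff_right_eq)
        finally show ?thesis .
      qed
      also have "\<dots> = int e'" using e' by simp
      finally have ec: "(b + r - c) mod r = e'" by simp
      have "k \<in> K" using kL kd ea ec e e' divi unfolding K_def assoc_matrix_def by simp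
      moreover have "g k = s" using kd ea ec s unfolding g_def by simp
      ultimately show "s \<in> g ` K" by blast
    qed
  qed
  have "card K = card {s\<in>S. f s = d}" using card_image[OF inj] img by simp
  also have "\<dots> = count (dmset r L h i j) d"
    unfolding dmset_def S_def[symmetric] f_def[symmetric] by (rule count_img_mset_set[OF fin, symmetric])
  finally show ?thesis unfolding K_def d_def .
qed

theorem theorem10:
  fixes r J L :: nat and h :: "nat \<Rightarrow> nat \<Rightarrow> nat \<Rightarrow> bool"
  assumes "r \<ge> 1" and "J \<ge> 1" and "L \<ge> 1"
    and entries: "\<forall>j<J. \<forall>l<L.
        (\<forall>s<r. \<not> h j l s)
      \<or> (\<exists>a<r. \<forall>s<r. h j l s \<longleftrightarrow> s = a)
      \<or> (\<exists>a<r. \<exists>b<r. a \<noteq> b \<and> (\<forall>s<r. h j l s \<longleftrightarrow> s = a \<or> s = b))"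
    and col_weight: "\<exists>w. \<forall>k<L * r. card {p. p < J * r \<and> assoc_matrix r h p k} = w"
    and row_weight: "\<exists>w. \<forall>p<J * r. card {k. k < L * r \<and> assoc_matrix r h p k} = w"
  shows "dual_containing (J * r) (L * r) (assoc_matrix r h) \<longleftrightarrow>
         (\<forall>i<J. \<forall>j<J. multiplicity_even (dmset r L h i j))"
proof -
  note r = assms(1)
  have bz: "binner_zero (L*r) (assoc_matrix r h (i*r+a)) (assoc_matrix r h (j*r+c))
       \<longleftrightarrow> even (count (dmset r L h i j) ((c + r - a) mod r))"
    if "i < J" "j < J" "a < r" "c < r" for i j a c
    using overlap[OF r that, of L h] unfolding binner_zero_def by simp
  have cnt0: "count (dmset r L h i j) x = 0" if "x \<ge> r" for i j x
  proof -
    have "x \<notin># dmset r L h i j"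
    proof
      assume "x \<in># dmset r L h i j"
      then obtain s where "x = (\<lambda>(l, e, e'). (e + r - e') mod r) s"
        unfolding dmset_def by auto
      then have "x < r" using r by (auto split: prod.splits)
      then show False using that by simp
    qed
    then show ?thesis by (simp add: not_in_iff)
  qed
  show ?thesis
    unfolding dc_iff
  proof
    assume o: "\<forall>p<J * r. \<forall>q<J * r. binner_zero (L * r) (assoc_matrix r h p) (assoc_matrix r h q)"
    show "\<forall>i<J. \<forall>j<J. multiplicity_even (dmset r L h i j)"
      unfolding multiplicity_even_def
    proof (intro allI impI)
      fix i j x assume i: "i < J" and j: "j < J"
      show "even (count (dmset r L h i j) x)"
      proof (cases "x < r")
        case True
        have p: "i*r + 0 < J*r" using i r by simp
        have q: "j*r + x < J*r"
        proof -
          have "j*r + x < j*r + r" using True by simp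
          also have "\<dots> \<le> J * r" using j by (metis Suc_leI mult_Suc mult_le_mono1 add.commute)
          finally show ?thesis .
        qed
        have "(x + r - 0) mod r = x" using True by simp
        moreover have "binner_zero (L*r) (assoc_matrix r h (i*r+0)) (assoc_matrix r h (j*r+x))"
          using o p q by blast
        moreover have "0 < r" using r by simp
        ultimately show ?thesis using bz[OF i j _ True, of 0] by simp
      next
        case False then show ?thesis using cnt0 by simp
      qed
    qed
  next
    assume e: "\<forall>i<J. \<forall>j<J. multiplicity_even (dmset r L h i j)"
    show "\<forall>p<J * r. \<forall>q<J * r. binner_zero (L * r) (assoc_matrix r h p) (assoc_matrix r h q)"
    proof (intro allI impI)
      fix p q assume p: "p < J*r" and q: "q < J*r"
      have i: "p div r < J" and j: "q div r < J" using p q by (auto simp: less_mult_imp_div_less)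
      have a: "p mod r < r" and c: "q mod r < r" using r by auto
      have "binner_zero (L*r) (assoc_matrix r h (p div r * r + p mod r))
             (assoc_matrix r h (q div r * r + q mod r))"
        using bz[OF i j a c] e i j unfolding multiplicity_even_def by blast
      then show "binner_zero (L * r) (assoc_matrix r h p) (assoc_matrix r h q)" by simp
    qed
  qed
qed

end
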